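(* Let $n,m\ge 1$, $Q\in\mathbb{R}^{n\times n}$ symmetric positive definite, $A\in\mathbb{R}^{m\times n}$, $b\in\mathbb{R}^m$, $c\in\mathbb{R}^n$, and suppose the problem $$\min_{x\in\mathbb{R}^n}\ \tfrac12 x^\intercal Q x + c^\intercal x \quad\text{s.t.}\quad Ax\preceq b \qquad (P(Q,A,b,c))$$ is feasible, with (unique) optimal solution $x^\ast$. Let integers $0\le \bar m\le m$ and $0\le \bar n\le n$ be given and partition $$A=\begin{bmatrix} A_1\\ A_{21}\ \ A_{22}\end{bmatrix},\qquad A_1\in\mathbb{R}^{\bar m\times n},\ A_{21}\in\mathbb{R}^{(m-\bar m)\times \bar n},\ A_{22}\in\mathbb{R}^{(m-\bar m)\times(n-\bar n)}.$$ Consider an adversary (a coalition of the target node with some agents) that knows $Q$, $A$, $x^\ast$, the entries $b_1,\dots,b_{\bar m}$ and the entries $c_1,\dots,c_{\bar n}$. Then: (1) If $\bar m<m$ and there exists $\delta\in\mathbb{R}^{m-\bar m}$ with $\delta\neq 0$, $\delta\succeq 0$ and $A_{21}^\intercal\delta=0$, then $b$ cannot be uniquely retrieved by the adversary: there exist $b'\in\mathbb{R}^m$ with $b'\neq b$ and $c'\in\mathbb{R}^n$ such that $b'_j=b_j$ for all $j\le\bar m$, $c'_j=c_j$ for all $j\le \bar n$, and $x^\ast$ is the optimal solution of $P(Q,A,b',c')$. (2) If, in addition to the hypotheses of (1), $\bar n<n$ and $A_{22}^\intercal\delta\neq 0$, then $c$ cannot be uniquely retrieved by the adversary: there exist $c'\in\mathbb{R}^n$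 with $c'\neq c$ and $b'\in\mathbb{R}^m$ such that $b'_j=b_j$ for all $j\le\bar m$, $c'_j=c_j$ for all $j\le \bar n$, and $x^\ast$ is the optimal solution of $P(Q,A,b',c')$.
   Context: Vector inequalities $\preceq,\succeq$ are element-wise. The setting is a protocol that, given private data $b$ and $c$ held by agents and matrices $Q,A$ (here public), outputs the optimal solution $x^\ast$ of the quadratic program to a target node. Following the paper's notion of non-unique retrieval, a private input cannot be uniquely retrieved by an adversary if there are at least two values of it, each consistent (together with some values of the other unknown private data) with everything the adversary knows; here "consistent" means agreeing with the known entries and yielding the same optimal solution $x^\ast$. *)

theory Defs
  imports Complex_Main
begin

(* Vectors in R^k are functions nat => real, only indices 0..<k matter;
   matrices in R^(r x k) are functions nat => nat => real, entries (i,j) with i<r, j<k.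
   Indices are 0-based: the paper's entry j (1-based) is index j-1 here. *)

definition sym_pos_def_mat :: "nat \<Rightarrow> (nat \<Rightarrow> nat \<Rightarrow> real) \<Rightarrow> bool" where
  "sym_pos_def_mat n Q \<longleftrightarrow>
     (\<forall>i<n. \<forall>j<n. Q i j = Q j i) \<and>
     (\<forall>x::nat \<Rightarrow> real. (\<exists>i<n. x i \<noteq> 0) \<longrightarrow> (\<Sum>i<n. \<Sum>j<n. x i * Q i j * x j) > 0)"

definition qp_obj :: "nat \<Rightarrow> (nat \<Rightarrow> nat \<Rightarrow> real) \<Rightarrow> (nat \<Rightarrow> real) \<Rightarrow> (nat \<Rightarrow> real) \<Rightarrow> real" where
  "qp_obj n Q c x = (1/2) * (\<Sum>i<n. \<Sum>j<n. x i * Q i j * x j) + (\<Sum>i<n. c i * x i)"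

definition qp_feasible :: "nat \<Rightarrow> nat \<Rightarrow> (nat \<Rightarrow> nat \<Rightarrow> real) \<Rightarrow> (nat \<Rightarrow> real) \<Rightarrow> (nat \<Rightarrow> real) \<Rightarrow> bool" where
  "qp_feasible n m A b x \<longleftrightarrow> (\<forall>i<m. (\<Sum>j<n. A i j * x j) \<le> b i)"

definition qp_optimal :: "nat \<Rightarrow> nat \<Rightarrow> (nat \<Rightarrow> nat \<Rightarrow> real) \<Rightarrow> (nat \<Rightarrow> nat \<Rightarrow> real)
    \<Rightarrow> (nat \<Rightarrow> real) \<Rightarrow> (nat \<Rightarrow> real) \<Rightarrow> (nat \<Rightarrow> real) \<Rightarrow> bool" where
  "qp_optimal n m Q A b c x \<longleftrightarrow> qp_feasible n m A b x \<and>
     (\<forall>y. qp_feasible n m A b y \<longrightarrow> qp_obj n Q c x \<le> qp_obj n Q c y)"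

end

theory Submission
  imports Defs
begin

definition lin :: "((nat \<Rightarrow> real) \<Rightarrow> real) \<Rightarrow> bool" where
  "lin f \<longleftrightarrow> (\<forall>u v (t::real). f (\<lambda>j. u j + t * v j) = f u + t * f v)"

lemma linD: "lin f \<Longrightarrow> f (\<lambda>j. u j + t * v j) = f u + t * f v"
  unfolding lin_def by blast

lemma lin_zero: "lin f \<Longrightarrow> f (\<lambda>j. 0) = 0"
  using linD[of f "\<lambda>j. 0" 1 "\<lambda>j. 0"] by simp

lemma lin_neg: "lin f \<Longrightarrow> f (\<lambda>j. - w j) = - f w"
proof -
  assume l: "lin f"
  show ?thesis using linD[OF l, of "\<lambda>j. 0" "-1" w] lin_zero[OF l] by simp
qed

lemma farkas:
  fixes m :: nat shows "lin f \<Longrightarrow> (\<forall>i<m. lin (a i)) \<Longrightarrow> (\<forall>w. (\<forall>i<m. a i w \<ge> 0) \<longrightarrow> f w \<ge> 0)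
   \<Longrightarrow> \<exists>l. (\<forall>i<m. l i \<ge> (0::real)) \<and> (\<forall>w. f w = (\<Sum>i<m. l i * a i w))"
proof (induction m arbitrary: f a)
  case (0 f a)
  note lf = 0(1) and h = 0(3)
  have "f w = 0" for w
  proof -
    have "f w \<ge> 0" "f (\<lambda>j. - w j) \<ge> 0" using h by auto
    then show ?thesis using lin_neg[OF lf] by simp
  qed
  then show ?case by simp
next
  case (Suc m f a)
  note lf = Suc.prems(1) and la = Suc.prems(2) and h = Suc.prems(3)
  show ?case
  proof (cases "\<forall>w. (\<forall>i<m. a i w \<ge> 0) \<longrightarrow> f w \<ge> 0")
    case True
    then obtain l where l: "\<forall>i<m. l i \<ge> (0::real)" "\<forall>w. f w = (\<Sum>i<m. l i * a i w)"
      using Suc.IH[OF lf, of a] la by auto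
    show ?thesis
    proof (intro exI[of _ "l(m := 0)"] conjI allI impI)
      fix i assume "i < Suc m" then show "(l(m := 0)) i \<ge> 0" using l by auto
    next
      fix w
      have "(\<Sum>i<m. (l(m := 0)) i * a i w) = (\<Sum>i<m. l i * a i w)" by (rule sum.cong) auto
      then show "f w = (\<Sum>i<Suc m. (l(m := 0)) i * a i w)" using l by simp
    qed
  next
    case False
    then obtain w0 where w0: "\<forall>i<m. a i w0 \<ge> 0" "f w0 < 0" by (auto simp: not_le)
    define \<alpha> where "\<alpha> = a m w0"
    have \<alpha>: "\<alpha> < 0"
    proof (rule ccontr)
      assume "\<not> \<alpha> < 0"
      then have "\<forall>i<Suc m. a i w0 \<ge> 0" using w0 \<alpha>_def by (auto simp: less_Suc_eq)
      then show False using h w0 by force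
    qed
    define aT where "aT i w = a i w - a m w * a i w0 / \<alpha>" for i w
    define ft where "ft w = f w - a m w * f w0 / \<alpha>" for w
    have lam: "lin (a m)" using la by simp
    have lft: "lin ft" using lf lam unfolding lin_def ft_def by (simp add: algebra_simps add_divide_distrib)
    have lat: "\<forall>i<m. lin (aT i)"
    proof (intro allI impI)
      fix i assume "i < m"
      then have "lin (a i)" using la by simp
      then show "lin (aT i)" using lam unfolding lin_def aT_def by (simp add: algebra_simps add_divide_distrib)
    qed
    have ht: "\<forall>w. (\<forall>i<m. aT i w \<ge> 0) \<longrightarrow> ft w \<ge> 0"
    proof (intro allI impI)
      fix w assume aw: "\<forall>i<m. aT i w \<ge> 0"
      define w' where "w' = (\<lambda>j. w j + (- (a m w / \<alpha>)) * w0 j)"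
      have e: "a i w' = a i w - a m w / \<alpha> * a i w0" if "i < Suc m" for i
        using linD[of "a i" w "- (a m w / \<alpha>)" w0] la that unfolding w'_def by simp
      have "a m w' = 0" using e[of m] \<alpha> \<alpha>_def by simp
      moreover have "a i w' = aT i w" if "i < m" for i using e[of i] that unfolding aT_def by simp
      ultimately have "\<forall>i<Suc m. a i w' \<ge> 0" using aw by (auto simp: less_Suc_eq)
      then have "f w' \<ge> 0" using h by blast
      moreover have "f w' = ft w" using linD[OF lf, of w "- (a m w / \<alpha>)" w0] unfolding w'_def ft_def by simp
      ultimately show "ft w \<ge> 0" by simp
    qed
    obtain \<mu> where \<mu>: "\<forall>i<m. \<mu> i \<ge> (0::real)" "\<forall>w. ft w = (\<Sum>i<m. \<mu> i * aT i w)"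
      using Suc.IH[OF lft lat ht] by blast
    define S where "S = (\<Sum>i<m. \<mu> i * a i w0)"
    have S0: "S \<ge> 0" unfolding S_def using \<mu>(1) w0(1) by (auto intro!: sum_nonneg)
    define l where "l = \<mu>(m := (f w0 - S) / \<alpha>)"
    show ?thesis
    proof (intro exI[of _ l] conjI allI impI)
      fix i assume "i < Suc m" then show "l i \<ge> 0"
        using \<mu>(1) \<alpha> S0 w0(2) unfolding l_def by (auto simp: less_Suc_eq divide_nonpos_neg)
    next
      fix w
      have s1: "(\<Sum>i<m. l i * a i w) = (\<Sum>i<m. \<mu> i * a i w)" unfolding l_def by (rule sum.cong) auto
      have "(\<Sum>i<m. \<mu> i * aT i w) = (\<Sum>i<m. \<mu> i * a i w) - a m w / \<alpha> * S"
        unfolding aT_def S_def by (simp add: algebra_simps sum_subtractf sum_distrib_left)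
      then have "f w = (\<Sum>i<m. \<mu> i * a i w) - a m w / \<alpha> * S + a m w * f w0 / \<alpha>"
        using \<mu>(2)[rule_format, of w] unfolding ft_def by simp
      also have "\<dots> = (\<Sum>i<m. l i * a i w) + l m * a m w"
        using s1 \<alpha> unfolding l_def by (simp add: field_simps)
      finally show "f w = (\<Sum>i<Suc m. l i * a i w)" by simp
    qed
  qed
qed


definition quad :: "nat \<Rightarrow> (nat \<Rightarrow> nat \<Rightarrow> real) \<Rightarrow> (nat \<Rightarrow> real) \<Rightarrow> (nat \<Rightarrow> real) \<Rightarrow> real" where
  "quad n Q u v = (\<Sum>i<n. \<Sum>j<n. u i * Q i j * v j)"

definition grad :: "nat \<Rightarrow> (nat \<Rightarrow> nat \<Rightarrow> real) \<Rightarrow> (nat \<Rightarrow> real) \<Rightarrow> (nat \<Rightarrow> real) \<Rightarrow> nat \<Rightarrow> real" where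
  "grad n Q c x j = (\<Sum>k<n. Q j k * x k) + c j"

lemma quad_sym:
  assumes "\<forall>i<n. \<forall>j<n. Q i j = Q j i"
  shows "quad n Q u v = quad n Q v u"
proof -
  have "quad n Q u v = (\<Sum>j<n. \<Sum>i<n. u i * Q i j * v j)" unfolding quad_def by (rule sum.swap)
  also have "\<dots> = quad n Q v u" unfolding quad_def
    by (intro sum.cong refl) (use assms in \<open>auto simp: mult.commute mult.left_commute\<close>)
  finally show ?thesis .
qed

lemma expand:
  assumes "\<forall>i<n. \<forall>j<n. Q i j = Q j i"
  shows "qp_obj n Q c (\<lambda>j. x j + t * d j) = qp_obj n Q c x + t * (\<Sum>j<n. grad n Q c x j * d j)
           + t^2 / 2 * quad n Q d d"
proof -
  have q: "quad n Q (\<lambda>j. x j + t * d j) (\<lambda>j. x j + t * d j) =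
      quad n Q x x + t * quad n Q x d + t * quad n Q d x + t^2 * quad n Q d d"
    unfolding quad_def
    by (simp add: algebra_simps power2_eq_square sum.distrib sum_distrib_left)
  have g: "(\<Sum>j<n. grad n Q c x j * d j) = quad n Q d x + (\<Sum>j<n. c j * d j)"
    unfolding grad_def quad_def
    by (simp add: algebra_simps sum.distrib sum_distrib_left sum_distrib_right)
  have s: "quad n Q x d = quad n Q d x" using quad_sym[OF assms] .
  show ?thesis
    unfolding qp_obj_def quad_def[symmetric] q g s
    by (simp add: algebra_simps sum.distrib sum_distrib_left)
qed

lemma psd:
  assumes "sym_pos_def_mat n Q" shows "quad n Q d d \<ge> 0"
proof (cases "\<exists>i<n. d i \<noteq> 0")
  case True then show ?thesis using assms unfolding sym_pos_def_mat_def quad_def by (simp add: less_imp_le)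
next
  case False then show ?thesis unfolding quad_def by simp
qed


lemma suff:
  assumes Q: "sym_pos_def_mat n Q" and fx: "qp_feasible n m A b x"
    and l0: "\<forall>i<m. l i \<ge> 0"
    and cs: "\<forall>i<m. l i * ((\<Sum>j<n. A i j * x j) - b i) = 0"
    and st: "\<forall>j<n. grad n Q c x j + (\<Sum>i<m. l i * A i j) = 0"
  shows "qp_optimal n m Q A b c x"
  unfolding qp_optimal_def
proof (intro conjI allI impI fx)
  fix y assume fy: "qp_feasible n m A b y"
  define d where "d j = y j - x j" for j
  have yd: "y = (\<lambda>j. x j + 1 * d j)" unfolding d_def by auto
  have sy: "\<forall>i<n. \<forall>j<n. Q i j = Q j i" using Q unfolding sym_pos_def_mat_def by blast
  have G: "(\<Sum>j<n. grad n Q c x j * d j) = - (\<Sum>i<m. l i * (\<Sum>j<n. A i j * d j))"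
  proof -
    have "(\<Sum>j<n. grad n Q c x j * d j) = (\<Sum>j<n. - (\<Sum>i<m. l i * A i j) * d j)"
    proof (intro sum.cong refl)
      fix j assume "j \<in> {..<n}"
      then have "grad n Q c x j = - (\<Sum>i<m. l i * A i j)" using st by (simp add: eq_neg_iff_add_eq_0)
      then show "grad n Q c x j * d j = - (\<Sum>i<m. l i * A i j) * d j" by simp
    qed
    also have "\<dots> = - (\<Sum>i<m. l i * (\<Sum>j<n. A i j * d j))"
      by (simp add: sum_distrib_left sum_distrib_right sum_negf mult.assoc) (rule sum.swap)
    finally show ?thesis .
  qed
  have "(\<Sum>i<m. l i * (\<Sum>j<n. A i j * d j)) = (\<Sum>i<m. l i * ((\<Sum>j<n. A i j * y j) - b i))"
  proof (intro sum.cong refl)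
    fix i assume "i \<in> {..<m}"
    then have "l i * ((\<Sum>j<n. A i j * x j) - b i) = 0" using cs by simp
    then have e1: "l i * (\<Sum>j<n. A i j * x j) = l i * b i" by (simp add: right_diff_distrib)
    moreover have "(\<Sum>j<n. A i j * d j) = (\<Sum>j<n. A i j * y j) - (\<Sum>j<n. A i j * x j)"
      unfolding d_def by (simp add: algebra_simps sum_subtractf)
    ultimately show "l i * (\<Sum>j<n. A i j * d j) = l i * ((\<Sum>j<n. A i j * y j) - b i)"
      by (simp only: right_diff_distrib e1)
  qed
  also have "\<dots> \<le> 0"
    using fy l0 unfolding qp_feasible_def by (intro sum_nonpos) (simp add: mult_nonneg_nonpos)
  finally have "(\<Sum>j<n. grad n Q c x j * d j) \<ge> 0" using G by simp
  moreover have "quad n Q d d \<ge> 0" using psd[OF Q] .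
  ultimately show "qp_obj n Q c x \<le> qp_obj n Q c y"
    unfolding yd expand[OF sy] by simp
qed


lemma dir:
  assumes Q: "sym_pos_def_mat n Q" and opt: "qp_optimal n m Q A b c x"
    and hd: "\<forall>i<m. (\<Sum>j<n. A i j * x j) = b i \<longrightarrow> (\<Sum>j<n. A i j * d j) \<le> 0"
  shows "(\<Sum>j<n. grad n Q c x j * d j) \<ge> 0"
proof (rule ccontr)
  define G where "G = (\<Sum>j<n. grad n Q c x j * d j)"
  define D where "D = quad n Q d d"
  define Ax where "Ax i = (\<Sum>j<n. A i j * x j)" for i
  define Ad where "Ad i = (\<Sum>j<n. A i j * d j)" for i
  assume "\<not> (\<Sum>j<n. grad n Q c x j * d j) \<ge> 0"
  then have G0: "G < 0" unfolding G_def by simp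
  have fx: "\<forall>i<m. Ax i \<le> b i" using opt unfolding qp_optimal_def qp_feasible_def Ax_def by blast
  define eps where "eps i = (if Ax i = b i then 1 else (b i - Ax i) / (\<bar>Ad i\<bar> + 1))" for i
  define S where "S = insert (- G / (\<bar>D\<bar> + 1)) (eps ` {..<m})"
  define T where "T = Min S"
  have finS: "finite S" "S \<noteq> {}" unfolding S_def by auto
  have eps0: "eps i > 0" if "i < m" for i
    using fx that unfolding eps_def by (auto intro!: divide_pos_pos)
  have T0: "T > 0" unfolding T_def using finS eps0 G0
    by (subst Min_gr_iff) (auto simp: S_def intro!: divide_neg_pos)
  have Teps: "T \<le> eps i" if "i < m" for i unfolding T_def using finS that by (auto simp: S_def intro!: Min_le)
  have TG: "T \<le> - G / (\<bar>D\<bar> + 1)" unfolding T_def using finS by (auto simp: S_def intro!: Min_le)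
  define y where "y = (\<lambda>j. x j + T * d j)"
  have Ay: "(\<Sum>j<n. A i j * y j) = Ax i + T * Ad i" for i
    unfolding y_def Ax_def Ad_def by (simp add: algebra_simps sum.distrib sum_distrib_left)
  have fy: "qp_feasible n m A b y" unfolding qp_feasible_def
  proof (intro allI impI)
    fix i assume i: "i < m"
    show "(\<Sum>j<n. A i j * y j) \<le> b i"
    proof (cases "Ax i = b i")
      case True
      then have "Ad i \<le> 0" using hd i unfolding Ax_def Ad_def by blast
      then have "T * Ad i \<le> 0" using T0 by (simp add: mult_nonneg_nonpos)
      then show ?thesis using Ay True by simp
    next
      case False
      then have s: "b i - Ax i > 0" using fx i by force
      have "T * Ad i \<le> T * \<bar>Ad i\<bar>" using T0 by (simp add: mult_left_mono)
      also have "\<dots> \<le> eps i * \<bar>Ad i\<bar>" using Teps[OF i] by (simp add: mult_right_mono)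
      also have "\<dots> = (b i - Ax i) * \<bar>Ad i\<bar> / (\<bar>Ad i\<bar> + 1)" using False unfolding eps_def by simp
      also have "\<dots> \<le> b i - Ax i" using s
        by (subst pos_divide_le_eq) (auto simp: algebra_simps)
      finally show ?thesis using Ay by simp
    qed
  qed
  have sy: "\<forall>i<n. \<forall>j<n. Q i j = Q j i" using Q unfolding sym_pos_def_mat_def by blast
  have "qp_obj n Q c x \<le> qp_obj n Q c y" using opt fy unfolding qp_optimal_def by blast
  also have "qp_obj n Q c y = qp_obj n Q c x + T * G + T^2 / 2 * D"
    unfolding y_def expand[OF sy] G_def D_def ..
  finally have "0 \<le> T * (G + T / 2 * D)" by (simp add: algebra_simps power2_eq_square)
  moreover have "G + T / 2 * D < 0"
  proof -
    have D0: "D \<ge> 0" unfolding D_def using psd[OF Q] .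
    have "T * D \<le> (- G / (\<bar>D\<bar> + 1)) * D" using mult_right_mono[OF TG D0] .
    also have "\<dots> \<le> - G"
    proof -
      have "G * (D + 1) \<le> D * G" using G0 by (simp add: algebra_simps)
      then have "G \<le> D * G / (D + 1)" using D0 by (simp add: le_divide_eq)
      then show ?thesis using D0 by (simp add: mult.commute)
    qed
    finally show ?thesis using G0 by simp
  qed
  ultimately show False using T0 mult_pos_neg[OF T0, of "G + T / 2 * D"] by linarith
qed


lemma kkt:
  assumes Q: "sym_pos_def_mat n Q" and opt: "qp_optimal n m Q A b c x"
  shows "\<exists>l. (\<forall>i<m. l i \<ge> 0) \<and> (\<forall>i<m. l i * ((\<Sum>j<n. A i j * x j) - b i) = 0)
            \<and> (\<forall>j<n. grad n Q c x j + (\<Sum>i<m. l i * A i j) = 0)"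
proof -
  define act where "act i \<longleftrightarrow> (\<Sum>j<n. A i j * x j) = b i" for i
  define a where "a i w = (if act i then - (\<Sum>j<n. A i j * w j) else 0)" for i w
  define f where "f w = (\<Sum>j<n. grad n Q c x j * w j)" for w
  have lf: "lin f" unfolding lin_def f_def by (simp add: algebra_simps sum.distrib sum_distrib_left)
  have la: "\<forall>i<m. lin (a i)" unfolding lin_def a_def by (simp add: algebra_simps sum.distrib sum_distrib_left)
  have h: "\<forall>w. (\<forall>i<m. a i w \<ge> 0) \<longrightarrow> f w \<ge> 0"
  proof (intro allI impI)
    fix w assume "\<forall>i<m. a i w \<ge> 0"
    then have "\<forall>i<m. (\<Sum>j<n. A i j * x j) = b i \<longrightarrow> (\<Sum>j<n. A i j * w j) \<le> 0"
      unfolding a_def act_def by force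
    then show "f w \<ge> 0" unfolding f_def by (rule dir[OF Q opt])
  qed
  obtain l where l: "\<forall>i<m. l i \<ge> 0" "\<forall>w. f w = (\<Sum>i<m. l i * a i w)"
    using farkas[OF lf la h] by blast
  define l' where "l' i = (if act i then l i else 0)" for i
  show ?thesis
  proof (intro exI[of _ l'] conjI allI impI)
    fix i assume "i < m" then show "l' i \<ge> 0" using l unfolding l'_def by simp
  next
    fix i assume "i < m" then show "l' i * ((\<Sum>j<n. A i j * x j) - b i) = 0" unfolding l'_def act_def by simp
  next
    fix j assume j: "j < n"
    define w where "w k = (if k = j then 1 else 0 :: real)" for k
    have e1: "f w = grad n Q c x j" unfolding f_def w_def using j by (simp add: if_distrib cong: if_cong)
    have e2: "a i w = (if act i then - A i j else 0)" for i
      unfolding a_def w_def using j by (simp add: if_distrib cong: if_cong)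
    have "grad n Q c x j = (\<Sum>i<m. l i * a i w)" using l(2) e1 by simp
    also have "\<dots> = (\<Sum>i<m. l i * (if act i then - A i j else 0))" using e2 by simp
    also have "\<dots> = - (\<Sum>i<m. l' i * A i j)" unfolding l'_def sum_negf[symmetric] by (intro sum.cong refl) simp
    finally show "grad n Q c x j + (\<Sum>i<m. l' i * A i j) = 0" by simp
  qed
qed


theorem proposition3:
  fixes n m mb nb :: nat
    and Q A :: "nat \<Rightarrow> nat \<Rightarrow> real"
    and b c xs \<delta> :: "nat \<Rightarrow> real"
  assumes "n \<ge> 1" and "m \<ge> 1"
    and "mb \<le> m" and "nb \<le> n"
    and "sym_pos_def_mat n Q"
    and "qp_optimal n m Q A b c xs"
    and "mb < m"
    and "\<exists>i\<in>{mb..<m}. \<delta> i \<noteq> 0"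
    and "\<forall>i\<in>{mb..<m}. \<delta> i \<ge> 0"
    and "\<forall>j<nb. (\<Sum>i=mb..<m. A i j * \<delta> i) = 0"
  shows "(\<exists>b' c'. (\<exists>i<m. b' i \<noteq> b i) \<and> (\<forall>i<mb. b' i = b i) \<and> (\<forall>j<nb. c' j = c j)
            \<and> qp_optimal n m Q A b' c' xs)
       \<and> ((nb < n \<and> (\<exists>j\<in>{nb..<n}. (\<Sum>i=mb..<m. A i j * \<delta> i) \<noteq> 0)) \<longrightarrow>
          (\<exists>c' b'. (\<exists>j<n. c' j \<noteq> c j) \<and> (\<forall>i<mb. b' i = b i) \<and> (\<forall>j<nb. c' j = c j)
            \<and> qp_optimal n m Q A b' c' xs))"
proof -
  note Q = assms(5) and opt = assms(6)
  obtain l where l0: "\<forall>i<m. l i \<ge> 0" and cs: "\<forall>i<m. l i * ((\<Sum>j<n. A i j * xs j) - b i) = 0"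
    and st: "\<forall>j<n. grad n Q c xs j + (\<Sum>i<m. l i * A i j) = 0"
    using kkt[OF Q opt] by blast
  have fx: "\<forall>i<m. (\<Sum>j<n. A i j * xs j) \<le> b i" using opt unfolding qp_optimal_def qp_feasible_def by blast
  define dh where "dh i = (if mb \<le> i \<and> i < m then \<delta> i else 0)" for i
  have dh0: "dh i \<ge> 0" for i using assms(9) unfolding dh_def by auto
  have dhs: "(\<Sum>i<m. A i j * dh i) = (\<Sum>i=mb..<m. A i j * \<delta> i)" for j
  proof -
    have "(\<Sum>i<m. A i j * dh i) = (\<Sum>i\<in>{mb..<m}. A i j * dh i)"
      by (rule sum.mono_neutral_right) (auto simp: dh_def)
    also have "\<dots> = (\<Sum>i=mb..<m. A i j * \<delta> i)" by (rule sum.cong) (auto simp: dh_def)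
    finally show ?thesis .
  qed
  have gradc: "grad n Q c' xs j = grad n Q c xs j + (c' j - c j)" for c' j unfolding grad_def by simp
  have P1: "\<exists>b' c'. (\<exists>i<m. b' i \<noteq> b i) \<and> (\<forall>i<mb. b' i = b i) \<and> (\<forall>j<nb. c' j = c j)
            \<and> qp_optimal n m Q A b' c' xs"
  proof -
    define S where "S = {i. mb \<le> i \<and> i < m \<and> \<delta> i > 0}"
    have finS: "finite S" unfolding S_def by auto
    have neS: "S \<noteq> {}"
    proof -
      obtain i where i: "i \<in> {mb..<m}" "\<delta> i \<noteq> 0" using assms(8) by blast
      then have "\<delta> i \<ge> 0" using assms(9) by blast
      then have "i \<in> S" using i unfolding S_def by auto
      then show ?thesis by blast
    qed
    define t where "t = Min ((\<lambda>i. l i / \<delta> i) ` S)"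
    obtain k where kS: "k \<in> S" and tk: "t = l k / \<delta> k"
    proof -
      have "t \<in> (\<lambda>i. l i / \<delta> i) ` S" unfolding t_def using finS neS by (intro Min_in) auto
      then show ?thesis using that by blast
    qed
    have tle: "t \<le> l i / \<delta> i" if "i \<in> S" for i unfolding t_def using finS that by auto
    have k: "mb \<le> k" "k < m" "\<delta> k > 0" using kS unfolding S_def by auto
    have t0: "t \<ge> 0" using tk k l0 by simp
    define l' where "l' i = l i - t * dh i" for i
    define c' where "c' j = c j + t * (\<Sum>i<m. A i j * dh i)" for j
    define b' where "b' = b(k := b k + 1)"
    have lge: "l i \<ge> t * dh i" if "i < m" for i
    proof (cases "i \<in> S")
      case True
      then have "\<delta> i > 0" "dh i = \<delta> i" unfolding S_def dh_def by auto
      then show ?thesis using tle[OF True] by (simp add: le_divide_eq)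
    next
      case False
      show ?thesis
      proof (cases "mb \<le> i")
        case True
        then have "\<delta> i \<ge> 0" using assms(9) that by simp
        then have "\<delta> i = 0" using False True that unfolding S_def by auto
        then show ?thesis using l0 that by (simp add: dh_def)
      next
        case False
        then have "dh i = 0" unfolding dh_def by simp
        then show ?thesis using l0 that by simp
      qed
    qed
    have "qp_optimal n m Q A b' c' xs"
    proof (rule suff[OF Q, of m A b' xs l'])
      show "qp_feasible n m A b' xs" unfolding qp_feasible_def
      proof (intro allI impI)
        fix i assume "i < m"
        then show "(\<Sum>j<n. A i j * xs j) \<le> b' i" using fx unfolding b'_def by auto
      qed
      show "\<forall>i<m. l' i \<ge> 0" unfolding l'_def using lge by simp
      show "\<forall>i<m. l' i * ((\<Sum>j<n. A i j * xs j) - b' i) = 0"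
      proof (intro allI impI)
        fix i assume i: "i < m"
        show "l' i * ((\<Sum>j<n. A i j * xs j) - b' i) = 0"
        proof (cases "i = k")
          case True
          then show ?thesis unfolding l'_def dh_def tk using k by simp
        next
          case False
          then have bi: "b' i = b i" unfolding b'_def by simp
          have h0: "t * dh i * ((\<Sum>j<n. A i j * xs j) - b i) = 0"
          proof (cases "t * dh i = 0")
            case False
            then have "t * dh i > 0" using t0 dh0[of i] by (simp add: less_le)
            then have "l i > 0" using lge[OF i] by simp
            moreover have "l i * ((\<Sum>j<n. A i j * xs j) - b i) = 0" using cs i by blast
            ultimately show ?thesis by simp
          qed simp
          have c0: "l i * ((\<Sum>j<n. A i j * xs j) - b i) = 0" using cs i by blast
          have "l' i * ((\<Sum>j<n. A i j * xs j) - b' i) = l i * ((\<Sum>j<n. A i j * xs j) - b i) - t * dh i * ((\<Sum>j<n. A i j * xs j) - b i)"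
            unfolding l'_def bi by (simp only: left_diff_distrib)
          then show ?thesis by (simp only: h0 c0 diff_self)
        qed
      qed
      show "\<forall>j<n. grad n Q c' xs j + (\<Sum>i<m. l' i * A i j) = 0"
      proof (intro allI impI)
        fix j assume j: "j < n"
        have "(\<Sum>i<m. l' i * A i j) = (\<Sum>i<m. l i * A i j) - t * (\<Sum>i<m. A i j * dh i)"
          unfolding l'_def by (simp add: algebra_simps sum_subtractf sum_distrib_left)
        moreover have "grad n Q c' xs j = grad n Q c xs j + (c' j - c j)" by (rule gradc)
        moreover note st[rule_format, OF j]
        ultimately show "grad n Q c' xs j + (\<Sum>i<m. l' i * A i j) = 0"
          unfolding c'_def by linarith
      qed
    qed
    moreover have "b' k \<noteq> b k" unfolding b'_def by simp
    moreover have "\<forall>i<mb. b' i = b i" unfolding b'_def using k by auto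
    moreover have "\<forall>j<nb. c' j = c j" unfolding c'_def dhs using assms(10) by simp
    ultimately show ?thesis using k by blast
  qed
  have P2: "\<exists>c' b'. (\<exists>j<n. c' j \<noteq> c j) \<and> (\<forall>i<mb. b' i = b i) \<and> (\<forall>j<nb. c' j = c j)
            \<and> qp_optimal n m Q A b' c' xs"
    if hj: "\<exists>j\<in>{nb..<n}. (\<Sum>i=mb..<m. A i j * \<delta> i) \<noteq> 0"
  proof -
    define l' where "l' i = l i + dh i" for i
    define c' where "c' j = c j - (\<Sum>i<m. A i j * dh i)" for j
    define b' where "b' i = (if dh i > 0 then (\<Sum>j<n. A i j * xs j) else b i)" for i
    have "qp_optimal n m Q A b' c' xs"
    proof (rule suff[OF Q, of m A b' xs l'])
      show "qp_feasible n m A b' xs" unfolding qp_feasible_def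
      proof (intro allI impI)
        fix i assume "i < m"
        then show "(\<Sum>j<n. A i j * xs j) \<le> b' i" using fx unfolding b'_def by auto
      qed
      show "\<forall>i<m. l' i \<ge> 0" unfolding l'_def using l0 dh0 by (simp add: add_nonneg_nonneg)
      show "\<forall>i<m. l' i * ((\<Sum>j<n. A i j * xs j) - b' i) = 0"
      proof (intro allI impI)
        fix i assume i: "i < m"
        show "l' i * ((\<Sum>j<n. A i j * xs j) - b' i) = 0"
        proof (cases "dh i > 0")
          case True then show ?thesis unfolding b'_def by simp
        next
          case False then have "dh i = 0" using dh0[of i] by simp
          then show ?thesis using cs i unfolding b'_def l'_def by simp
        qed
      qed
      show "\<forall>j<n. grad n Q c' xs j + (\<Sum>i<m. l' i * A i j) = 0"
      proof (intro allI impI)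
        fix j assume j: "j < n"
        have "(\<Sum>i<m. l' i * A i j) = (\<Sum>i<m. l i * A i j) + (\<Sum>i<m. A i j * dh i)"
          unfolding l'_def by (simp add: algebra_simps sum.distrib)
        moreover have "grad n Q c' xs j = grad n Q c xs j + (c' j - c j)" by (rule gradc)
        moreover note st[rule_format, OF j]
        ultimately show "grad n Q c' xs j + (\<Sum>i<m. l' i * A i j) = 0"
          unfolding c'_def by linarith
      qed
    qed
    moreover have "\<exists>j<n. c' j \<noteq> c j" using hj unfolding c'_def dhs by auto
    moreover have "\<forall>i<mb. b' i = b i" unfolding b'_def dh_def by auto
    moreover have "\<forall>j<nb. c' j = c j" unfolding c'_def dhs using assms(10) by simp
    ultimately show ?thesis by blast
  qed
  show ?thesis using P1 P2 by blast
qed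

end
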